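(* Let $N,L\geq1$ be integers, $\sigma_p^2>0$, $N_0>0$ and $\mathcal{Y}\geq0$. For a normalized threshold $\lambda'\geq0$ let $$P_d(\lambda')=Q_{NL}\!\left(\sqrt{\frac{2L\sigma_p^2\mathcal{Y}}{N_0}},\sqrt{\lambda'}\right),\qquad P_f(\lambda')=\frac{\Gamma\!\left(NL,\frac{\lambda'}{2}\right)}{\Gamma(NL)},$$ and define $$\mathrm{AUC}(\mathcal{Y})\triangleq-\int_0^\infty P_d(\lambda')\frac{\partial P_f(\lambda')}{\partial\lambda'}\,d\lambda'.$$ Then $$\mathrm{AUC}(\mathcal{Y})=1-\exp\!\left(-\frac{L\sigma_p^2\mathcal{Y}}{N_0}\right)\sum_{l=0}^{NL-1}\frac{(NL)_l}{l!\,2^{NL+l}}\,{}_1F_1\!\left(NL+l,NL;\frac{L\sigma_p^2\mathcal{Y}}{2N_0}\right).$$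
   Context: $Q_\nu(a,b)$ is the generalized $\nu$th-order Marcum $Q$-function, $Q_\nu(a,b)=a^{1-\nu}\int_b^\infty x^{\nu}\exp\!\left(-\frac{x^2+a^2}{2}\right)I_{\nu-1}(ax)\,dx$ (for $a=0$ it equals $\Gamma(\nu,b^2/2)/\Gamma(\nu)$). $\Gamma(\cdot,\cdot)$ is the upper incomplete Gamma function, $(x)_l=x(x+1)\cdots(x+l-1)$ is the Pochhammer symbol, and ${}_1F_1$ is Kummer's confluent hypergeometric function. *)

theory Defs
  imports "HOL-Analysis.Analysis"
begin

definition upper_gamma :: "nat \<Rightarrow> real \<Rightarrow> real" where
  "upper_gamma s x = integral {x..} (\<lambda>t. t ^ (s - 1) * exp (- t))"

definition besselI :: "nat \<Rightarrow> real \<Rightarrow> real" where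
  "besselI n x = (\<Sum>k. (x / 2) ^ (2 * k + n) / (fact k * fact (k + n)))"

definition marcumQ :: "nat \<Rightarrow> real \<Rightarrow> real \<Rightarrow> real" where
  "marcumQ nu a b =
     (if a = 0 then upper_gamma nu (b^2 / 2) / Gamma (real nu)
      else a powr (1 - real nu) *
        integral {b..} (\<lambda>x. x ^ nu * exp (- (x^2 + a^2) / 2) * besselI (nu - 1) (a * x)))"

definition hyp1F1 :: "real \<Rightarrow> real \<Rightarrow> real \<Rightarrow> real" where
  "hyp1F1 a b z = (\<Sum>k. pochhammer a k / pochhammer b k * z ^ k / fact k)"

end

theory Submission
  imports Defs "HOL-Real_Asymp.Real_Asymp"
begin

definition E :: "nat \<Rightarrow> real \<Rightarrow> real" where
  "E m x = exp (-x) * (\<Sum>j<m. x^j / fact j)"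

lemma E_deriv: "(E (Suc m) has_real_derivative (- (exp (-x) * x^m / fact m))) (at x)"
proof (induction m)
  case 0
  show ?case unfolding E_def by (auto intro!: derivative_eq_intros)
next
  case (Suc m)
  have eq: "E (Suc (Suc m)) = (\<lambda>x. E (Suc m) x + exp (-x) * x^Suc m / fact (Suc m))"
    by (auto simp: E_def algebra_simps fun_eq_iff)
  have d: "((\<lambda>x. exp (-x) * x^Suc m / fact (Suc m)) has_real_derivative
      (exp (-x) * x^m / fact m - exp (-x) * x^Suc m / fact (Suc m))) (at x)"
  proof -
    have "((\<lambda>x. exp (-x) * x^Suc m / fact (Suc m)) has_real_derivative
      ((exp (- x) * - 1 * x ^ Suc m + real (Suc m) * (1 * x ^ (Suc m - Suc 0)) * exp (- x)) * fact (Suc m) -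
     exp (- x) * x ^ Suc m * 0) / (fact (Suc m) * fact (Suc m))) (at x)"
      by (rule derivative_eq_intros refl | simp)+
    moreover have "((exp (- x) * - 1 * x ^ Suc m + real (Suc m) * (1 * x ^ (Suc m - Suc 0)) * exp (- x)) * fact (Suc m) -
     exp (- x) * x ^ Suc m * 0) / (fact (Suc m) * fact (Suc m)) = 
     (exp (- x) * - 1 * x ^ Suc m + real (Suc m) * x ^ m * exp (- x)) / fact (Suc m)"
      by simp
    moreover have "((1 + real m) * x ^ m * exp (- x) - exp (- x) * (x * x ^ m)) /
     ((1 + real m) * fact m) =
     exp (- x) * x ^ m / fact m -
     exp (- x) * (x * x ^ m) / ((1 + real m) * fact m)"
      apply (subst diff_divide_distrib)
      apply (subst mult.assoc)
      apply (subst mult_divide_mult_cancel_left)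
      apply simp
      apply (simp add: mult.commute)
      done
    then have "(exp (- x) * - 1 * x ^ Suc m + real (Suc m) * x ^ m * exp (- x)) / fact (Suc m)
       = exp (-x) * x^m / fact m - exp (-x) * x^Suc m / fact (Suc m)"
      unfolding fact_Suc[of m] by (simp add: add_divide_distrib)
    ultimately show ?thesis by simp
  qed
  show ?case unfolding eq using DERIV_add[OF Suc.IH d] by simp
qed

lemma E_nonneg: "x \<ge> 0 \<Longrightarrow> E m x \<ge> 0"
  unfolding E_def by (auto intro!: mult_nonneg_nonneg sum_nonneg)

lemma E_le1: assumes "x \<ge> 0" shows "E m x \<le> 1"
proof -
  have "(\<Sum>j<m. x^j / fact j) \<le> exp x"
  proof -
    have s: "(\<lambda>n. x^n / fact n) sums exp x" using exp_converges[of x] by (simp add: divide_inverse mult.commute)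
    show ?thesis using sum_le_suminf[OF sums_summable[OF s], of "{..<m}"] sums_unique[OF s] assms by auto
  qed
  then show ?thesis unfolding E_def by (simp add: exp_minus field_simps)
qed

lemma E_lim: "(E m \<longlongrightarrow> 0) at_top"
proof -
  have "((\<lambda>x::real. \<Sum>j<m. (x^j / exp x) / fact j) \<longlongrightarrow> (\<Sum>j<m. 0)) at_top"
  proof -
    have "((\<lambda>x::real. x^i/exp x/fact i) \<longlongrightarrow> 0) at_top" for i
      using tendsto_divide_zero[OF tendsto_power_div_exp_0[of i], of "fact i"] by (simp add: divide_divide_eq_left)
    then show ?thesis using tendsto_sum[of "{..<m}" "\<lambda>j (x::real). x^j/exp x/fact j" "\<lambda>j. 0" at_top] by simp
  qed
  moreover have "E m = (\<lambda>x::real. \<Sum>j<m. (x^j / exp x) / fact j)"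
    by (auto simp: E_def fun_eq_iff sum_distrib_left exp_minus field_simps)
  ultimately show ?thesis by simp
qed

lemma has_integral_inf_FTC:
  fixes h F :: "real \<Rightarrow> real"
  assumes der: "\<And>x. x \<ge> a \<Longrightarrow> (F has_real_derivative h x) (at x)"
    and cont: "continuous_on {a..} h"
    and lim: "(F \<longlongrightarrow> l) at_top"
    and nonneg: "\<And>y. y \<ge> a \<Longrightarrow> h y \<ge> 0"
  shows "(h has_integral (l - F a)) {a..}"
proof (rule has_integral_to_inf)
  fix y :: real
  show "h integrable_on {a..y}"
    by (rule integrable_continuous_interval) (rule continuous_on_subset[OF cont], auto)
next
  have "(h has_integral (F y - F a)) {a..y}" if "y \<ge> a" for y
    using that by (intro fundamental_theorem_of_calculus)
       (auto intro!: has_field_derivative_at_within der simp flip: has_real_derivative_iff_has_vector_derivative)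
  then have "\<forall>\<^sub>F y in at_top. integral {a..y} h = F y - F a"
    using eventually_at_top_linorder[of "\<lambda>y. integral {a..y} h = F y - F a"] by auto
  moreover have "((\<lambda>y. F y - F a) \<longlongrightarrow> l - F a) at_top"
    by (intro tendsto_diff lim tendsto_const)
  ultimately show "((\<lambda>y. integral {a..y} h) \<longlongrightarrow> l - F a) at_top"
    by (simp add: filterlim_cong)
qed (use nonneg in auto)

lemma Ginc: assumes "x \<ge> 0"
  shows "((\<lambda>t. t^m * exp (-t)) has_integral (fact m * E (Suc m) x)) {x..}"
proof -
  have "((\<lambda>t. t^m * exp (-t)) has_integral (0 - (- fact m * E (Suc m) x))) {x..}"
  proof (rule has_integral_inf_FTC)
    fix t show "((\<lambda>t. - fact m * E (Suc m) t) has_real_derivative t^m * exp (-t)) (at t)"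
      using DERIV_cmult[OF E_deriv[of m t], of "- fact m"] by (simp add: field_simps)
  next
    show "((\<lambda>t. - fact m * E (Suc m) t) \<longlongrightarrow> 0) at_top"
      using tendsto_mult[OF tendsto_const E_lim, of "- fact m" "Suc m"] by simp
  qed (use assms in \<open>auto intro!: continuous_intros\<close>)
  then show ?thesis by simp
qed

lemma Gauss_int: assumes "b \<ge> 0"
  shows "((\<lambda>x. x^(2*m+1) * exp (-(x^2)/2)) has_integral (2^m * fact m * E (Suc m) (b^2/2))) {b..}"
proof -
  define F where "F = (\<lambda>x::real. - (2^m * fact m) * E (Suc m) (x^2/2))"
  have "((\<lambda>x. x^(2*m+1) * exp (-(x^2)/2)) has_integral (0 - F b)) {b..}"
  proof (rule has_integral_inf_FTC)
    fix x :: real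
    have d: "(F has_real_derivative (- (2^m * fact m)) * (- (exp (-(x^2/2)) * (x^2/2)^m / fact m) * (2 * x / 2))) (at x)"
      unfolding F_def
      by (intro DERIV_cmult DERIV_chain2[OF E_deriv]) (auto intro!: derivative_eq_intros)
    have e: "(- (2^m * fact m)) * (- (exp (-(x^2/2)) * (x^2/2)^m / fact m) * (2 * x / 2)) = x^(2*m+1) * exp (-(x^2)/2)"
    proof -
      have eq: "(2::real)^m*(x^2/2)^m = x^(2*m)"
        by (simp add: power_divide power_mult)
      have "(- (2^m * fact m)) * (- (exp (-(x^2/2)) * (x^2/2)^m / fact m) * (2 * x / 2))
          = ((2::real)^m*(x^2/2)^m) * x * exp (-(x^2)/2)" by simp
      also have "\<dots> = x^(2*m+1) * exp (-(x^2)/2)" unfolding eq by (simp add: power_add)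
      finally show ?thesis .
    qed
    show "(F has_real_derivative x^(2*m+1) * exp (-(x^2)/2)) (at x)" unfolding e[symmetric] by (rule d)
  next
    have "filterlim (\<lambda>x::real. x^2/2) at_top at_top" by real_asymp
    then have "((\<lambda>x. E (Suc m) (x^2/2)) \<longlongrightarrow> 0) at_top"
      using filterlim_compose[OF E_lim] by blast
    then show "(F \<longlongrightarrow> 0) at_top"
      unfolding F_def using tendsto_mult_right_zero[of _ at_top "- (2^m * fact m)"] by simp
  qed (use assms in \<open>auto intro!: continuous_intros\<close>)
  then show ?thesis by (simp add: F_def)
qed

lemma exp_sums': "(\<lambda>k. x^k / fact k) sums exp (x::real)"
  using exp_converges[of x] by (simp add: divide_inverse mult.commute)

lemma poisson_partial_le: assumes "c \<ge> 0" shows "(\<Sum>k<K. exp (-c) * c^k / fact k) \<le> (1::real)"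
proof -
  have "(\<Sum>k<K. c^k / fact k) \<le> exp c"
    using sum_le_suminf[OF sums_summable[OF exp_sums'[of c]], of "{..<K}"] sums_unique[OF exp_sums'[of c]] assms by auto
  then have "exp (-c) * (\<Sum>k<K. c^k / fact k) \<le> exp (-c) * exp c" by simp
  then show ?thesis by (simp add: sum_distrib_left exp_minus field_simps)
qed

lemma bessel_summable: fixes y :: real assumes "y \<ge> 0"
  shows "summable (\<lambda>k. (y/2)^(2*k+p) / (fact k * fact (k+p)))"
proof (rule summable_comparison_test)
  show "summable (\<lambda>k. (y/2)^p * (((y/2)^2)^k / fact k))"
    by (rule summable_mult, rule sums_summable[OF exp_sums'])
  show "\<exists>N. \<forall>n\<ge>N. norm ((y/2)^(2*n+p) / (fact n * fact (n+p))) \<le> (y/2)^p * (((y/2)^2)^n / fact n)"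
  proof (intro exI allI impI)
    fix n :: nat
    have e: "(y/2)^(2*n+p) = (y/2)^p * ((y/2)^2)^n" by (simp add: power_add power_mult[symmetric] mult.commute)
    have "fact n \<le> fact n * (fact (n+p) :: real)"
      using fact_ge_1[of "n+p", where 'a=real] by (simp add: mult_le_cancel_left1)
    then have "(y/2)^(2*n+p) / (fact n * fact (n+p)) \<le> (y/2)^(2*n+p) / fact n"
      using assms by (intro divide_left_mono) auto
    then show "norm ((y/2)^(2*n+p) / (fact n * fact (n+p))) \<le> (y/2)^p * (((y/2)^2)^n / fact n)"
      using assms by (simp add: e)
  qed
qed

lemma u_eq: assumes "a > (0::real)"
  shows "a powr (1 - real (Suc p)) * (x^Suc p * exp (-(x^2+a^2)/2) * ((a*x/2)^(2*k+p)/(fact k * fact(k+p))))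
   = exp(-(a^2/2)) * (a^2/2)^k / (fact k * fact (k+p) * 2^(k+p)) * (x^(2*(k+p)+1) * exp(-(x^2)/2))"
proof -
  have pw: "a powr (1 - real (Suc p)) = 1 / a^p"
    using assms by (simp add: powr_minus_divide powr_realpow)
  have ex: "exp (-(x^2+a^2)/2) = exp(-(a^2/2)) * exp(-(x^2)/2)"
    by (simp add: exp_add[symmetric] field_simps)
  have ap: "a^(2*k+p) = a^p * (a^2)^k" by (simp add: power_add power_mult[symmetric] mult.commute)
  have xp: "x^Suc p * x^(2*k+p) = x^(2*(k+p)+1)" by (simp add: power_add[symmetric] add_ac)
  have tp: "(2::real)^(2*k+p) = 2^k * 2^(k+p)" by (simp add: power_add[symmetric])
  have "a powr (1 - real (Suc p)) * (x^Suc p * exp (-(x^2+a^2)/2) * ((a*x/2)^(2*k+p)/(fact k * fact(k+p))))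
     = (1/a^p) * (x^Suc p * (exp(-(a^2/2)) * exp(-(x^2)/2)) * (a^p * (a^2)^k * x^(2*k+p) / (2^k * 2^(k+p)) /(fact k * fact(k+p))))"
    unfolding pw ex by (simp add: power_mult_distrib power_divide ap tp)
  also have "\<dots> = exp(-(a^2/2)) * ((a^2)^k / 2^k) / (fact k * fact (k+p) * 2^(k+p)) * ((x^Suc p * x^(2*k+p)) * exp(-(x^2)/2))"
    using assms by (simp add: field_simps)
  also have "\<dots> = exp(-(a^2/2)) * (a^2/2)^k / (fact k * fact (k+p) * 2^(k+p)) * (x^(2*(k+p)+1) * exp(-(x^2)/2))"
    unfolding xp by (simp add: power_divide)
  finally show ?thesis .
qed


lemma marcum_series:
  assumes a: "a > 0" and b: "b \<ge> 0"
  shows "(\<lambda>k. exp(-(a^2/2)) * (a^2/2)^k / fact k * E (Suc (k+p)) (b^2/2)) sums marcumQ (Suc p) a b"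
proof -
  define c where "c = a^2/2"
  define u where "u k x = a powr (1 - real (Suc p)) * (x^Suc p * exp (-(x^2+a^2)/2) * ((a*x/2)^(2*k+p)/(fact k * fact(k+p))))" for k x
  define g where "g x = a powr (1 - real (Suc p)) * (x^Suc p * exp (-(x^2+a^2)/2) * besselI p (a*x))" for x
  define q where "q k = exp(-c) * c^k / fact k * E (Suc (k+p)) (b^2/2)" for k
  define C where "C k = exp(-(a^2/2)) * (a^2/2)^k / (fact k * fact (k+p) * 2^(k+p))" for k
  have u_eq': "u k = (\<lambda>x. C k * (x^(2*(k+p)+1) * exp(-(x^2)/2)))" for k
    unfolding u_def C_def using u_eq[OF a] by (simp add: fun_eq_iff)
  have uint: "(u k has_integral q k) {b..}" for k
  proof -
    have "(u k has_integral (C k * (2^(k+p) * fact (k+p) * E (Suc (k+p)) (b^2/2)))) {b..}"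
      unfolding u_eq' by (rule has_integral_mult_right, rule Gauss_int[OF b])
    moreover have "C k * (2^(k+p) * fact (k+p) * E (Suc (k+p)) (b^2/2)) = q k"
      unfolding C_def q_def c_def by (simp add: field_simps)
    ultimately show ?thesis by simp
  qed
  have u_nonneg: "u k x \<ge> 0" if "x \<ge> 0" for k x
    using that unfolding u_eq' C_def by (auto intro!: mult_nonneg_nonneg)
  have q_nonneg: "q k \<ge> 0" for k
    unfolding q_def c_def using E_nonneg[of "b^2/2" "Suc(k+p)"] by simp
  have qsum_le: "(\<Sum>k<K. q k) \<le> 1" for K
  proof -
    have "(\<Sum>k<K. q k) \<le> (\<Sum>k<K. exp (-c) * c^k / fact k)"
      unfolding q_def c_def by (intro sum_mono mult_left_le) (auto intro: E_le1)
    also have "\<dots> \<le> 1" by (rule poisson_partial_le) (simp add: c_def)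
    finally show ?thesis .
  qed
  have "g integrable_on {b..} \<and> ((\<lambda>K. integral {b..} (\<lambda>x. \<Sum>k<K. u k x)) \<longlongrightarrow> integral {b..} g) sequentially"
  proof (rule monotone_convergence_increasing)
    fix K show "(\<lambda>x. \<Sum>k<K. u k x) integrable_on {b..}"
      using has_integral_sum[of "{..<K}" u q "{b..}"] uint by blast
  next
    fix K x assume "x \<in> {b..}"
    then have "x \<ge> 0" using b by auto
    then show "(\<Sum>k<K. u k x) \<le> (\<Sum>k<Suc K. u k x)" using u_nonneg by simp
  next
    fix x assume "x \<in> {b..}"
    then have x: "x \<ge> 0" using b by auto
    have "(\<lambda>k. (a*x/2)^(2*k+p) / (fact k * fact (k+p))) sums besselI p (a*x)"
      unfolding besselI_def using bessel_summable[of "a*x" p] a x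
      by (intro summable_sums) (simp add: mult_nonneg_nonneg)
    from sums_mult[OF this, of "a powr (1 - real (Suc p)) * (x^Suc p * exp (-(x^2+a^2)/2))"]
    have "(\<lambda>k. u k x) sums g x" unfolding u_def g_def by (simp add: mult.assoc)
    then show "(\<lambda>K. \<Sum>k<K. u k x) \<longlonglongrightarrow> g x" by (simp add: sums_def)
  next
    have ie: "integral {b..} (\<lambda>x. \<Sum>k<K. u k x) = (\<Sum>k<K. q k)" for K
      using has_integral_sum[of "{..<K}" u q "{b..}"] uint by (simp add: integral_unique)
    show "bounded (range (\<lambda>K. integral {b..} (\<lambda>x. \<Sum>k<K. u k x)))"
      unfolding ie using qsum_le q_nonneg
      by (intro boundedI[of _ 1]) (auto simp: sum_nonneg)
  qed
  moreover have ie: "integral {b..} (\<lambda>x. \<Sum>k<K. u k x) = (\<Sum>k<K. q k)" for K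
    using has_integral_sum[of "{..<K}" u q "{b..}"] uint by (simp add: integral_unique)
  ultimately have "q sums integral {b..} g" by (simp add: sums_def)
  moreover have "marcumQ (Suc p) a b = integral {b..} g"
    unfolding marcumQ_def g_def using a by simp
  ultimately show ?thesis unfolding q_def c_def by simp
qed

definition h :: "nat \<Rightarrow> nat \<Rightarrow> real" where
  "h a b = (\<Sum>l<b. real ((a+l) choose l) / 2^(a+l+1))"

lemma h_diff: "h b k - h (b+1) k = real ((b+k) choose (b+1)) / 2^(b+k+1)"
proof (induction k)
  case 0 show ?case by (simp add: h_def)
next
  case (Suc k)
  have pas: "real ((b+k) choose (b+1)) + real ((b+k) choose k) = real ((b+k+1) choose k)"
  proof -
    have "(b+k) choose k = (b+k) choose b" by (simp add: binomial_symmetric[of k "b+k", simplified])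
    moreover have "(b+k+1) choose k = (b+k+1) choose (b+1)" by (simp add: binomial_symmetric[of k "b+k+1", simplified])
    moreover have "(b+k+1) choose (b+1) = ((b+k) choose b) + ((b+k) choose (b+1))"
      using binomial_Suc_Suc[of "b+k" b] by simp
    ultimately show ?thesis by simp
  qed
  have "h b (Suc k) - h (b+1) (Suc k) = (h b k - h (b+1) k) + real ((b+k) choose k) / 2^(b+k+1)
      - real ((b+1+k) choose k) / 2^(b+1+k+1)"
    by (simp add: h_def)
  also have "\<dots> = (real ((b+k) choose (b+1)) + real ((b+k) choose k)) / 2^(b+k+1)
      - real ((b+1+k) choose k) / 2^(b+1+k+1)"
    unfolding Suc.IH by (simp add: add_divide_distrib)
  also have "\<dots> = real ((b+k+1) choose k) / 2^(b+k+1) - real ((b+1+k) choose k) / 2^(b+1+k+1)"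
    unfolding pas ..
  also have "\<dots> = real ((b+k+1) choose k) / 2^(b+k+2)"
    by (simp add: add_ac field_simps)
  also have "(b+k+1) choose k = (b + Suc k) choose (b+1)" by (simp add: binomial_symmetric[of k "b+k+1", simplified])
  finally show ?case by (simp add: add_ac)
qed

lemma geom_half: "(\<Sum>l<Suc a. 1 / 2^(l+1) :: real) = 1 - 1/2^(a+1)"
  by (induction a) (auto simp: field_simps)

lemma h_sym: "h a (b+1) + h b (a+1) = 1"
proof (induction b)
  case 0
  have "h a 1 = 1/2^(a+1)" by (simp add: h_def)
  moreover have "h 0 (a+1) = 1 - 1/2^(a+1)" unfolding h_def using geom_half[of a] by simp
  ultimately show ?case by simp
next
  case (Suc b)
  have "h a (Suc b + 1) = h a (b+1) + real ((a+(b+1)) choose (b+1)) / 2^(a+(b+1)+1)"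
    by (simp add: h_def)
  moreover have "h (Suc b) (a+1) = h b (a+1) - real ((b+(a+1)) choose (b+1)) / 2^(b+(a+1)+1)"
    using h_diff[of b "a+1"] by simp
  ultimately show ?case using Suc.IH by (simp add: add_ac)
qed

lemma h_nonneg: "h a b \<ge> 0" unfolding h_def by (auto intro!: sum_nonneg)

lemma h_le1: "h a b \<le> 1"
proof -
  have "h a b \<le> h a (b+1)" by (simp add: h_def)
  also have "\<dots> = 1 - h b (a+1)" using h_sym[of a b] by simp
  also have "\<dots> \<le> 1" using h_nonneg by simp
  finally show ?thesis .
qed

lemma pochhammer_Suc_nat: "pochhammer (real (Suc m)) k = fact (m+k) / fact m"
proof (induction k)
  case 0 then show ?case by simp
next
  case (Suc k)
  have "pochhammer (real (Suc m)) (Suc k) = fact (m+k)/fact m * (real (Suc m) + real k)"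
    using Suc.IH by (simp add: pochhammer_Suc)
  also have "\<dots> = fact (m + Suc k)/fact m" by (simp add: fact_Suc field_simps)
  finally show ?case .
qed

lemma E_zero: "E (Suc m) 0 = 1"
  unfolding E_def sum.lessThan_Suc_shift by simp

lemma Wint:
  "((\<lambda>x. E m (x/2) * (exp (-(x/2)) * (x/2)^p / fact p / 2)) has_integral h p m) {0..}"
proof -
  define co where "co j = 1 / (fact j * fact p * 2^(j+p+1) :: real)" for j
  have pt: "E m (x/2) * (exp (-(x/2)) * (x/2)^p / fact p / 2) = (\<Sum>j<m. co j * (x^(j+p) * exp (-x)))" for x
  proof -
    have ee: "exp (-(x/2)) * exp (-(x/2)) = exp (-x)" by (simp add: exp_add[symmetric])
    have "E m (x/2) * (exp (-(x/2)) * (x/2)^p / fact p / 2)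
        = (\<Sum>j<m. (exp (-(x/2)) * exp (-(x/2))) * ((x/2)^j * (x/2)^p) / (fact j * fact p * 2))"
      unfolding E_def by (simp add: sum_distrib_left sum_distrib_right field_simps)
    also have "\<dots> = (\<Sum>j<m. co j * (x^(j+p) * exp (-x)))"
      unfolding ee co_def by (intro sum.cong refl) (simp add: power_add[symmetric] power_divide field_simps)
    finally show ?thesis .
  qed
  have "((\<lambda>x. \<Sum>j<m. co j * (x^(j+p) * exp (-x))) has_integral (\<Sum>j<m. co j * (fact (j+p) * E (Suc (j+p)) 0))) {0..}"
    by (intro has_integral_sum has_integral_mult_right Ginc) auto
  moreover have "(\<Sum>j<m. co j * (fact (j+p) * E (Suc (j+p)) 0)) = h p m"
    unfolding h_def E_zero co_def
  proof (intro sum.cong refl)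
    fix j
    have "real ((p+j) choose j) = fact (p+j) / (fact j * fact p)"
      using binomial_fact[of j "p+j"] by simp
    then show "1 / (fact j * fact p * 2 ^ (j + p + 1)) * (fact (j + p) * 1) = real ((p + j) choose j) / 2 ^ (p + j + 1)"
      by (simp add: add_ac field_simps)
  qed
  ultimately show ?thesis unfolding pt by simp
qed


lemma term_id:
  fixes c :: real
  shows "exp(-c)*c^k/fact k * (real ((k+p+l) choose l) / 2^(k+p+l+1))
    = exp(-c) * (pochhammer (real (Suc p)) l / (fact l * 2^(Suc p + l))) *
      (pochhammer (real (Suc p + l)) k / pochhammer (real (Suc p)) k * (c/2)^k / fact k)"
proof -
  have r: "real (Suc p + l) = real (Suc (p+l))" by simp
  have b: "real ((k+p+l) choose l) = fact (k+p+l) / (fact l * fact (k+p))"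
    using binomial_fact[of l "k+p+l"] by simp
  have f1: "fact (p+l+k) = (fact (k+p+l) :: real)" by (simp add: add_ac)
  have f2: "fact (p+k) = (fact (k+p) :: real)" by (simp add: add_ac)
  show ?thesis unfolding r pochhammer_Suc_nat b f1 f2
    by (simp add: power_divide power_add field_simps)
qed


lemma auc_core:
  fixes c :: real and p :: nat and Pd Pf :: "real \<Rightarrow> real"
  assumes c: "c \<ge> 0"
    and Pd: "\<And>x. x \<ge> 0 \<Longrightarrow> (\<lambda>k. exp(-c)*c^k/fact k * E (Suc(k+p)) (x/2)) sums Pd x"
    and Pf: "\<And>x. x > 0 \<Longrightarrow> deriv Pf x = -(exp(-(x/2)) * (x/2)^p / fact p / 2)"
  shows "- integral {0..} (\<lambda>x. Pd x * deriv Pf x) = 1 - exp(-c) *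
     (\<Sum>l<Suc p. pochhammer (real (Suc p)) l / (fact l * 2^(Suc p + l)) *
        hyp1F1 (real (Suc p + l)) (real (Suc p)) (c/2))"
proof -
  define P where "P k = exp(-c)*c^k/fact k" for k
  define w where "w x = exp(-(x/2)) * (x/2)^p / fact p / 2" for x :: real
  define q where "q l = pochhammer (real (Suc p)) l / (fact l * 2^(Suc p + l))" for l
  define H where "H l = hyp1F1 (real (Suc p + l)) (real (Suc p)) (c/2)" for l
  define t where "t l k = P k * (real ((k+p+l) choose l) / 2^(k+p+l+1))" for l k
  have P_nonneg: "P k \<ge> 0" for k using c unfolding P_def by simp
  have w_nonneg: "x \<ge> 0 \<Longrightarrow> w x \<ge> 0" for x unfolding w_def by simp
  have Psum_le: "(\<Sum>k<K. P k) \<le> 1" for K unfolding P_def by (rule poisson_partial_le[OF c])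
  have step1: "- integral {0..} (\<lambda>x. Pd x * deriv Pf x) = integral {0..} (\<lambda>x. Pd x * w x)"
  proof -
    have "integral {0..} (\<lambda>x. Pd x * deriv Pf x) = integral {0..} (\<lambda>x. - (Pd x * w x))"
      by (rule integral_spike[of "{0}"]) (auto simp: Pf w_def)
    then show ?thesis by simp
  qed
  define u where "u k x = P k * (E (Suc(k+p)) (x/2) * w x)" for k and x :: real
  have uint: "(u k has_integral P k * h p (Suc (k+p))) {0..}" for k
    unfolding u_def w_def by (rule has_integral_mult_right, rule Wint)
  have ie: "integral {0..} (\<lambda>x. \<Sum>k<K. u k x) = (\<Sum>k<K. P k * h p (Suc (k+p)))" for K
    using has_integral_sum[of "{..<K}" u "\<lambda>k. P k * h p (Suc (k+p))" "{0..}"] uint by (simp add: integral_unique)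
  have "(\<lambda>x. Pd x * w x) integrable_on {0..} \<and> ((\<lambda>K. integral {0..} (\<lambda>x. \<Sum>k<K. u k x)) \<longlongrightarrow> integral {0..} (\<lambda>x. Pd x * w x)) sequentially"
  proof (rule monotone_convergence_increasing)
    fix K show "(\<lambda>x. \<Sum>k<K. u k x) integrable_on {0..}"
      using has_integral_sum[of "{..<K}" u "\<lambda>k. P k * h p (Suc (k+p))" "{0..}"] uint by blast
  next
    fix K x assume "x \<in> {0::real..}"
    then have "u K x \<ge> 0" unfolding u_def using P_nonneg w_nonneg E_nonneg[of "x/2"] by simp
    then show "(\<Sum>k<K. u k x) \<le> (\<Sum>k<Suc K. u k x)" by simp
  next
    fix x assume "x \<in> {0::real..}"
    then have "(\<lambda>k. P k * E (Suc(k+p)) (x/2) * w x) sums (Pd x * w x)"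
      using sums_mult2[OF Pd[of x], of "w x"] unfolding P_def by simp
    then show "(\<lambda>K. \<Sum>k<K. u k x) \<longlonglongrightarrow> Pd x * w x"
      unfolding u_def sums_def by (simp add: mult.assoc)
  next
    have "norm (\<Sum>k<K. P k * h p (Suc (k+p))) \<le> 1" for K
    proof -
      have "0 \<le> (\<Sum>k<K. P k * h p (Suc (k+p)))" using P_nonneg h_nonneg by (auto intro!: sum_nonneg)
      moreover have "(\<Sum>k<K. P k * h p (Suc (k+p))) \<le> (\<Sum>k<K. P k)"
        using P_nonneg h_le1 by (intro sum_mono mult_left_le) auto
      ultimately show ?thesis using Psum_le[of K] by simp
    qed
    then show "bounded (range (\<lambda>K. integral {0..} (\<lambda>x. \<Sum>k<K. u k x)))"
      unfolding ie by (intro boundedI[of _ 1]) auto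
  qed
  then have S1: "(\<lambda>k. P k * h p (Suc (k+p))) sums integral {0..} (\<lambda>x. Pd x * w x)"
    unfolding ie sums_def by simp
  have split: "P k * h p (Suc (k+p)) = P k - (\<Sum>l<Suc p. t l k)" for k
  proof -
    have "h p (k+p+1) + h (k+p) (p+1) = 1" by (rule h_sym)
    then have "h p (Suc (k+p)) = 1 - h (k+p) (Suc p)" by simp
    moreover have "P k * h (k+p) (Suc p) = (\<Sum>l<Suc p. t l k)"
      unfolding h_def t_def sum_distrib_left ..
    ultimately show ?thesis by (simp add: right_diff_distrib)
  qed
  have Psums: "P sums 1"
    using sums_mult[OF exp_sums'[of c], of "exp (-c)"] unfolding P_def by (simp add: exp_minus field_simps)
  have tsums: "t l sums (exp (-c) * q l * H l)" for l
  proof -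
    define G where "G k = pochhammer (real (Suc p + l)) k / pochhammer (real (Suc p)) k * (c/2)^k / fact k" for k
    have tG: "t l k = exp (-c) * q l * G k" for k
      unfolding t_def P_def q_def G_def by (rule term_id)
    have "summable (t l)"
    proof (rule summable_comparison_test)
      show "summable P" using Psums by (rule sums_summable)
      show "\<exists>N. \<forall>k\<ge>N. norm (t l k) \<le> P k"
      proof (intro exI allI impI)
        fix k :: nat
        have "real ((k+p+l) choose l) \<le> real ((2::nat)^(k+p+l))"
          by (rule of_nat_mono[OF binomial_le_pow2])
        also have "\<dots> = (2::real)^(k+p+l)" by simp
        also have "\<dots> \<le> 2^(k+p+l+1)" by simp
        finally have "real ((k+p+l) choose l) \<le> 2^(k+p+l+1)" .
        then have le1: "real ((k+p+l) choose l) / 2^(k+p+l+1) \<le> 1"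
          by (simp add: divide_le_eq)
        have tle: "t l k \<le> P k" unfolding t_def by (rule mult_left_le[OF le1 P_nonneg])
        have "t l k \<ge> 0" unfolding t_def using P_nonneg[of k] by simp
        then show "norm (t l k) \<le> P k" using tle by simp
      qed
    qed
    moreover have qpos: "exp (-c) * q l \<noteq> 0"
    proof -
      have "pochhammer (real (Suc p)) l > 0" by (rule pochhammer_pos) simp
      then show ?thesis unfolding q_def by simp
    qed
    ultimately have "summable G"
      using summable_divide[of "t l" "exp (-c) * q l"] tG by simp
    then have "G sums H l" unfolding H_def hyp1F1_def G_def by (rule summable_sums)
    from sums_mult[OF this, of "exp (-c) * q l"] have "(\<lambda>k. exp (-c) * q l * G k) sums (exp (-c) * q l * H l)" .
    moreover have "(\<lambda>k. exp (-c) * q l * G k) = t l" using tG by (simp add: fun_eq_iff)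
    ultimately show ?thesis by simp
  qed
  have "(\<lambda>k. P k - (\<Sum>l<Suc p. t l k)) sums (1 - (\<Sum>l<Suc p. exp (-c) * q l * H l))"
    by (intro sums_diff Psums sums_sum tsums)
  then have "(\<lambda>k. P k * h p (Suc (k+p))) sums (1 - (\<Sum>l<Suc p. exp (-c) * q l * H l))"
    unfolding split .
  with S1 have "integral {0..} (\<lambda>x. Pd x * w x) = 1 - (\<Sum>l<Suc p. exp (-c) * q l * H l)"
    using sums_unique2 by blast
  moreover have "(\<Sum>l<Suc p. exp (-c) * q l * H l) = exp (-c) * (\<Sum>l<Suc p. q l * H l)"
    unfolding sum_distrib_left by (simp add: mult.assoc)
  ultimately have fin: "integral {0..} (\<lambda>x. Pd x * w x) = 1 - exp (-c) * (\<Sum>l<Suc p. q l * H l)" by simp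
  show ?thesis using fin unfolding step1 q_def H_def .
qed

lemma upper_gamma_E: assumes "y \<ge> 0" shows "upper_gamma (Suc p) y = fact p * E (Suc p) y"
  unfolding upper_gamma_def using Ginc[OF assms, of p] by (simp add: integral_unique)

lemma Gamma_Suc_real: "Gamma (real (Suc p)) = fact p"
  using Gamma_fact[of p, where 'a=real] by (simp add: add.commute)

theorem corollary3:
  fixes N L :: nat and sp2 N0 Y :: real
  assumes "N \<ge> 1" and "L \<ge> 1" and "sp2 > 0" and "N0 > 0" and "Y \<ge> 0"
  defines "Pd \<equiv> (\<lambda>lam. marcumQ (N * L) (sqrt (2 * real L * sp2 * Y / N0)) (sqrt lam))"
      and "Pf \<equiv> (\<lambda>lam. upper_gamma (N * L) (lam / 2) / Gamma (real (N * L)))"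
  shows "- integral {0..} (\<lambda>lam. Pd lam * deriv Pf lam)
         = 1 - exp (- (real L * sp2 * Y / N0)) *
             (\<Sum>l<N * L. pochhammer (real (N * L)) l / (fact l * 2 ^ (N * L + l)) *
                hyp1F1 (real (N * L + l)) (real (N * L)) (real L * sp2 * Y / (2 * N0)))"
proof -
  have "N * L \<noteq> 0" using assms(1,2) by simp
  then obtain p where np: "N * L = Suc p" using not0_implies_Suc by blast
  define c where "c = real L * sp2 * Y / N0"
  have c0: "c \<ge> 0" unfolding c_def using assms by simp
  define a where "a = sqrt (2 * real L * sp2 * Y / N0)"
  have a2: "a^2/2 = c" unfolding a_def c_def using assms by simp
  have a0: "a \<ge> 0" unfolding a_def using assms by simp
  have Pd': "Pd = (\<lambda>x. marcumQ (Suc p) a (sqrt x))" unfolding Pd_def np a_def ..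
  have Pf': "Pf = (\<lambda>x. upper_gamma (Suc p) (x/2) / Gamma (real (Suc p)))" unfolding Pf_def np ..
  have PfE: "Pf x = E (Suc p) (x/2)" if "x \<ge> 0" for x
    unfolding Pf' using that by (simp add: upper_gamma_E Gamma_Suc_real Gamma_fact)
  have Pd_sums: "(\<lambda>k. exp(-c)*c^k/fact k * E (Suc(k+p)) (x/2)) sums Pd x" if x: "x \<ge> 0" for x
  proof (cases "c = 0")
    case True
    then have "a = 0" using a2 a0 by simp
    then have "Pd x = E (Suc p) (x/2)"
      unfolding Pd' marcumQ_def using x by (simp add: upper_gamma_E Gamma_Suc_real Gamma_fact)
    moreover have "(\<lambda>k. exp(-c)*c^k/fact k * E (Suc(k+p)) (x/2)) = (\<lambda>k. if k = 0 then E (Suc(k+p)) (x/2) else 0)"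
      using True by (auto simp: fun_eq_iff)
    ultimately show ?thesis using sums_single[of 0 "\<lambda>k. E (Suc(k+p)) (x/2)"] by simp
  next
    case False
    then have "a > 0" using a2 a0 by (cases "a = 0") auto
    from marcum_series[OF this, of "sqrt x" p] x show ?thesis unfolding Pd' a2 by simp
  qed
  have Pf_deriv: "deriv Pf x = -(exp(-(x/2)) * (x/2)^p / fact p / 2)" if x: "x > 0" for x
  proof -
    have "((\<lambda>y. E (Suc p) (y/2)) has_real_derivative (-(exp(-(x/2)) * (x/2)^p / fact p)) * (1/2)) (at x)"
      by (rule DERIV_chain2[OF E_deriv]) (auto intro!: derivative_eq_intros)
    then have "(Pf has_real_derivative (-(exp(-(x/2)) * (x/2)^p / fact p)) * (1/2)) (at x)"
      by (rule has_field_derivative_transform_within_open[of _ _ _ "{0<..}"]) (use x PfE in auto)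
    then show ?thesis by (simp add: DERIV_imp_deriv)
  qed
  have eq2: "real L * sp2 * Y / (2 * N0) = c / 2" unfolding c_def by simp
  show ?thesis
    unfolding np eq2 c_def[symmetric]
    by (rule auc_core[OF c0 Pd_sums Pf_deriv])
qed

end
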